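(* Let $n\ge 4$ and let $T$ be the one-column tableau with entries $i<j$ in $[n]$ (two rows), and suppose $T$ is a non-frozen prime tableau in $\mathrm{SSYT}(2,[n])$. Then $F_{2,n}(v_T)$ induces a split positroidal subdivision of the hypersimplex $\Delta(2,n)$, i.e. a positroidal subdivision with exactly two maximal cells.
   Context: $\mathrm{SSYT}(2,[n])$ denotes rectangular semistandard Young tableaux with $2$ rows and entries in $[n]$. A one-column tableau with entries $i<j$ is frozen if $\{i,j\}$ is a cyclic interval of $[n]$, i.e. $j=i+1$ or $(i,j)=(1,n)$; non-frozen means not frozen. Tableaux index the dual canonical basis of the Grassmannian coordinate ring $\mathbb{C}[\mathrm{Gr}(2,n)]$ (for a one-column tableau with entries $i<j$ the basis element is the Plücker coordinate $p_{ij}$); $T$ is prime if its basis element is not the product of the basis elements of two nontrivial tableaux. For $i\in[k-1]$, $j\in[n-k]$ (here $k=2$), the fundamental tableau $T_{i,j}$ is the one-column tableau with entries $[j,j+k]\setminus\{i+j\}$; every tableau is equivalent, modulo removing columns whose entries are consecutive integers, to a unique union of fundamental tableaux $\bigcup T_{i,j}^{\cup c_{i,j}}$, and $v_T=\sum c_{i,j}e_{i,j}\in\mathbb{R}^{(k-1)(n-k)}$. $F_{k,n}(y)=\sum_{J\in\binom{[n]}{k}}P_J(y)e^J$ (modulo the lineality space), where $P_J$ is the tropicalization of the Plücker coordinate $p_J$ of the Speyer–Williams web matrix, the $k\times n$ matrix parametrizing the positive Grassmannian by $(k-1)(n-k)$ positive variables, whose maximal minors are subtraction-free polynomials in these variables.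 The vector $(P_J(v_T))_J$ induces the regular subdivision of $\Delta(k,n)=\mathrm{conv}\{e_J: J\in\binom{[n]}{k}\}$ obtained by lifting $e_J$ to height $P_J(v_T)$ and projecting the lower faces; it is positroidal if all cells are matroid polytopes of positroids (matroids representable by real matrices with all maximal minors nonnegative). *)

theory Defs
  imports Complex_Main "HOL-Library.Multiset"
begin

text \<open>A two-row tableau is represented by the multisets of entries of its two rows
  (for a semistandard rectangular tableau the rows are weakly increasing, so the
  tableau is determined by these multisets). The union of tableaux is the union of
  the row contents (re-sorted), i.e. the sum of the multisets.\<close>

type_synonym tableau2 = "nat multiset \<times> nat multiset"

definition tab_union :: "tableau2 \<Rightarrow> tableau2 \<Rightarrow> tableau2" where
  "tab_union T U = (fst T + fst U, snd T + snd U)"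

definition one_col :: "nat \<Rightarrow> nat \<Rightarrow> tableau2" where
  "one_col a b = ({#a#}, {#b#})"

text \<open>Frozen one-column tableau: the entries form a cyclic interval of [n].\<close>
definition frozen :: "nat \<Rightarrow> nat \<Rightarrow> nat \<Rightarrow> bool" where
  "frozen n a b \<longleftrightarrow> b = a + 1 \<or> (a = 1 \<and> b = n)"

definition consec_cols :: "nat multiset \<Rightarrow> tableau2" where
  "consec_cols D = (D, image_mset Suc D)"

definition tab_equiv :: "nat \<Rightarrow> tableau2 \<Rightarrow> tableau2 \<Rightarrow> bool" where
  "tab_equiv n T U \<longleftrightarrow> (\<exists>D D'. set_mset D \<subseteq> {1..n-1} \<and> set_mset D' \<subseteq> {1..n-1} \<and>
      tab_union T (consec_cols D) = tab_union U (consec_cols D'))"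

text \<open>Fundamental tableau T_{1,j} for k = 2: entries [j, j+2] minus {j+1}.\<close>
definition fund_tab :: "nat \<Rightarrow> tableau2" where
  "fund_tab j = ({#j#}, {#j + 2#})"

definition fund_union :: "nat \<Rightarrow> (nat \<Rightarrow> nat) \<Rightarrow> tableau2" where
  "fund_union n c = ((\<Sum>j\<in>{1..n-2}. repeat_mset (c j) (fst (fund_tab j))),
                     (\<Sum>j\<in>{1..n-2}. repeat_mset (c j) (snd (fund_tab j))))"

text \<open>The vector v_T (coordinate j stands for e_{1,j}, j in [n-2]).\<close>
definition vT :: "nat \<Rightarrow> tableau2 \<Rightarrow> nat \<Rightarrow> real" where
  "vT n T = (\<lambda>j. real ((THE c. (\<forall>j. j \<notin> {1..n-2} \<longrightarrow> c j = 0) \<and>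
                              tab_equiv n T (fund_union n c)) j))"

text \<open>Rows of the web matrix for k = 2, in the variables x_{1,1},...,x_{1,n-2}
  (x m stands for x_{1,m}): row 1 = (1, 0, -x1, -(x1+x2), ..., -(x1+...+x_{n-2})),
  row 2 = (0, 1, 1, ..., 1).\<close>
definition web_row1 :: "(nat \<Rightarrow> real) \<Rightarrow> nat \<Rightarrow> real" where
  "web_row1 x c = (if c = 1 then 1 else if c = 2 then 0 else - (\<Sum>m\<in>{1..c-2}. x m))"

definition web_row2 :: "(nat \<Rightarrow> real) \<Rightarrow> nat \<Rightarrow> real" where
  "web_row2 x c = (if c = 1 then 0 else 1)"

definition minor2 :: "(nat \<Rightarrow> real) \<Rightarrow> (nat \<Rightarrow> real) \<Rightarrow> nat set \<Rightarrow> real" where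
  "minor2 r1 r2 J = r1 (Min J) * r2 (Max J) - r1 (Max J) * r2 (Min J)"

definition web_pl :: "nat set \<Rightarrow> (nat \<Rightarrow> real) \<Rightarrow> real" where
  "web_pl J x = minor2 (web_row1 x) (web_row2 x) J"

text \<open>Tropicalization of a subtraction-free polynomial f (valuation / min convention):
  Trop f (y) = lim_{s \<rightarrow> \<infinity>} - log f(exp(-s y)) / s  ( = min over monomials).\<close>
definition trop :: "((nat \<Rightarrow> real) \<Rightarrow> real) \<Rightarrow> (nat \<Rightarrow> real) \<Rightarrow> real" where
  "trop f y = Lim at_top (\<lambda>s. - ln (f (\<lambda>m. exp (- s * y m))) / s)"

definition tropP :: "nat set \<Rightarrow> (nat \<Rightarrow> real) \<Rightarrow> real" where
  "tropP J y = trop (web_pl J) y"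

definition hverts :: "nat \<Rightarrow> nat set set" where
  "hverts n = {J. J \<subseteq> {1..n} \<and> card J = 2}"

text \<open>A cell of the regular subdivision induced by heights h: the vertex set of a
  (nonempty) lower face of the lifted point configuration (e_J, h J).\<close>
definition reg_cell :: "nat \<Rightarrow> (nat set \<Rightarrow> real) \<Rightarrow> nat set set \<Rightarrow> bool" where
  "reg_cell n h C \<longleftrightarrow> C \<noteq> {} \<and>
     (\<exists>(w::nat \<Rightarrow> real) (c::real).
        (\<forall>J\<in>hverts n. (\<Sum>a\<in>J. w a) + c \<le> h J) \<and>
        C = {J\<in>hverts n. (\<Sum>a\<in>J. w a) + c = h J})"

definition max_cell :: "nat \<Rightarrow> (nat set \<Rightarrow> real) \<Rightarrow> nat set set \<Rightarrow> bool" where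
  "max_cell n h C \<longleftrightarrow> reg_cell n h C \<and> (\<forall>C'. reg_cell n h C' \<and> C \<subseteq> C' \<longrightarrow> C' = C)"

definition positroid_bases :: "nat \<Rightarrow> nat set set \<Rightarrow> bool" where
  "positroid_bases n C \<longleftrightarrow> (\<exists>r1 r2 :: nat \<Rightarrow> real.
      (\<forall>J\<in>hverts n. 0 \<le> minor2 r1 r2 J) \<and> C = {J\<in>hverts n. minor2 r1 r2 J \<noteq> 0})"

definition positroidal_subdiv :: "nat \<Rightarrow> (nat set \<Rightarrow> real) \<Rightarrow> bool" where
  "positroidal_subdiv n h \<longleftrightarrow> (\<forall>C. reg_cell n h C \<longrightarrow> positroid_bases n C)"

definition split_positroidal_subdiv :: "nat \<Rightarrow> (nat set \<Rightarrow> real) \<Rightarrow> bool" where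
  "split_positroidal_subdiv n h \<longleftrightarrow> positroidal_subdiv n h \<and> card {C. max_cell n h C} = 2"

end

theory Submission
  imports Defs
begin


lemma hverts_obtain:
  assumes "J \<in> hverts n"
  obtains a b where "1 \<le> a" "a < b" "b \<le> n" "J = {a,b}"
proof -
  from assms have "card J = 2" "J \<subseteq> {1..n}" by (auto simp: hverts_def)
  then obtain x y where xy: "J = {x,y}" "x \<noteq> y" by (auto simp: card_2_iff)
  show ?thesis
  proof (cases "x < y")
    case True then show ?thesis using that xy \<open>J \<subseteq> {1..n}\<close> by auto
  next
    case False then have "y < x" using xy by auto
    then show ?thesis using that[of y x] xy \<open>J \<subseteq> {1..n}\<close> by auto
  qed
qed

lemma hverts_pair: "1 \<le> a \<Longrightarrow> a < b \<Longrightarrow> b \<le> n \<Longrightarrow> {a,b} \<in> hverts n"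
  by (auto simp: hverts_def)

lemma minor2_pair: "(a::nat) < b \<Longrightarrow> minor2 ra rb {a,b} = ra a * rb b - ra b * rb a"
  by (simp add: minor2_def max_def min_def)

lemma positroid_intro:
  fixes ra rb :: "nat \<Rightarrow> real"
  assumes C: "C \<subseteq> hverts n"
  and H: "\<And>a b. 1 \<le> a \<Longrightarrow> a < b \<Longrightarrow> b \<le> n \<Longrightarrow>
      0 \<le> ra a * rb b - ra b * rb a \<and> ({a,b} \<in> C \<longleftrightarrow> ra a * rb b - ra b * rb a \<noteq> 0)"
  shows "positroid_bases n C"
  unfolding positroid_bases_def
proof (intro exI conjI ballI)
  fix J assume "J \<in> hverts n"
  then obtain a b where ab: "1 \<le> a" "a < b" "b \<le> n" "J = {a,b}" by (rule hverts_obtain)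
  show "0 \<le> minor2 ra rb J" using H[OF ab(1-3)] ab by (simp add: minor2_pair)
next
  show "C = {J \<in> hverts n. minor2 ra rb J \<noteq> 0}"
  proof (intro set_eqI iffI)
    fix J assume "J \<in> C"
    with C have "J \<in> hverts n" by auto
    then obtain a b where ab: "1 \<le> a" "a < b" "b \<le> n" "J = {a,b}" by (rule hverts_obtain)
    show "J \<in> {J \<in> hverts n. minor2 ra rb J \<noteq> 0}"
      using H[OF ab(1-3)] ab \<open>J \<in> C\<close> \<open>J \<in> hverts n\<close> by (simp add: minor2_pair)
  next
    fix J assume "J \<in> {J \<in> hverts n. minor2 ra rb J \<noteq> 0}"
    then have "J \<in> hverts n" "minor2 ra rb J \<noteq> 0" by auto
    then obtain a b where ab: "1 \<le> a" "a < b" "b \<le> n" "J = {a,b}" by (meson hverts_obtain)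
    show "J \<in> C" using H[OF ab(1-3)] ab \<open>minor2 ra rb J \<noteq> 0\<close> by (simp add: minor2_pair)
  qed
qed

lemma positroid_L:
  assumes X: "X \<subseteq> {p..q}" and Y: "Y \<inter> {p..q} = {}"
  shows "positroid_bases n {J \<in> hverts n. J \<inter> X \<noteq> {} \<and> J \<inter> Y \<noteq> {}}"
  apply (rule positroid_intro[where ra = "\<lambda>z. if z \<in> X then 1 else 0"
      and rb = "\<lambda>z. if z \<in> Y then (if z < p then -1 else 1) else 0"])
  subgoal by (auto simp: hverts_def)
  subgoal for a b
  proof -
    assume ab: "1 \<le> a" "a < b" "b \<le> n"
    have XX: "\<And>z. z \<in> X \<Longrightarrow> p \<le> z \<and> z \<le> q" and YY: "\<And>z. z \<in> Y \<Longrightarrow> z < p \<or> q < z"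
      using X Y by auto
    have XY: "\<And>z. z \<in> X \<Longrightarrow> z \<notin> Y" using XX YY by fastforce
    show ?thesis using hverts_pair[of a b n] ab XX[of a] XX[of b] YY[of a] YY[of b] XY[of a] XY[of b]
      by (cases "a \<in> X"; cases "b \<in> X"; cases "a \<in> Y"; cases "b \<in> Y"; auto)
  qed
  done

text \<open>Interval T = {p..q}: one parallel class Z inside T, singletons outside.\<close>
lemma positroid_M1:
  shows "positroid_bases n {J \<in> hverts n. J \<subseteq> Z \<and> \<not> J \<subseteq> {p..q}}"
  apply (rule positroid_intro[where ra = "\<lambda>z. if z \<in> Z then 1 else 0"
      and rb = "\<lambda>z. if z \<in> Z then (if z \<in> {p..q} then real p else real z) else 0"])
  subgoal by (auto simp: hverts_def)
  subgoal for a b using hverts_pair[of a b n] by auto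
  done

lemma positroid_M2:
  shows "positroid_bases n {J \<in> hverts n. J \<subseteq> Z \<and> J \<inter> {p..q} \<noteq> {}}"
  apply (rule positroid_intro[where ra = "\<lambda>z. if z \<in> Z \<and> z \<in> {p..q} then 1 else 0"
      and rb = "\<lambda>z. if z \<in> Z then (if z < p then -1 else if z \<le> q then real z else 1) else 0"])
  subgoal by (auto simp: hverts_def)
  subgoal for a b using hverts_pair[of a b n] by auto
  done



lemma pair_hverts: "x \<in> {1..n} \<Longrightarrow> y \<in> {1..n} \<Longrightarrow> x \<noteq> y \<Longrightarrow> {x,y} \<in> hverts n"
  by (auto simp: hverts_def)

lemma face_lemma:
  fixes u :: "nat \<Rightarrow> real"
  assumes T: "T = {p..q} \<or> T = {1..n} - {p..q}" and pq: "1 \<le> p" "q \<le> n"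
  and U: "\<forall>J\<in>hverts n. \<not> J \<subseteq> T \<longrightarrow> sum u J \<le> 0"
  shows "positroid_bases n {J\<in>hverts n. \<not> J \<subseteq> T \<and> sum u J = 0}"
proof -
  define C where "C = {J\<in>hverts n. \<not> J \<subseteq> T \<and> sum u J = 0}"
  have Tsub: "T \<subseteq> {1..n}" using T pq by auto
  have UU: "u x + u y \<le> 0" if "x \<in> {1..n}" "y \<in> {1..n}" "x \<noteq> y" "\<not> {x,y} \<subseteq> T" for x y
    using U pair_hverts[OF that(1-3)] that by auto
  have Cpair: "J \<in> C \<longleftrightarrow> (\<exists>x y. x \<in> {1..n} \<and> y \<in> {1..n} \<and> x \<noteq> y \<and> J = {x,y} \<and>
        \<not> {x,y} \<subseteq> T \<and> u x + u y = 0)" for J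
  proof
    assume "J \<in> C"
    then have "J \<in> hverts n" by (auto simp: C_def)
    then obtain a b where ab: "1 \<le> a" "a < b" "b \<le> n" "J = {a,b}" by (rule hverts_obtain)
    then show "\<exists>x y. x \<in> {1..n} \<and> y \<in> {1..n} \<and> x \<noteq> y \<and> J = {x,y} \<and>
        \<not> {x,y} \<subseteq> T \<and> u x + u y = 0" using \<open>J \<in> C\<close>
      by (intro exI[of _ a] exI[of _ b]) (auto simp: C_def)
  next
    assume "\<exists>x y. x \<in> {1..n} \<and> y \<in> {1..n} \<and> x \<noteq> y \<and> J = {x,y} \<and>
        \<not> {x,y} \<subseteq> T \<and> u x + u y = 0"
    then obtain x y where "x \<in> {1..n}" "y \<in> {1..n}" "x \<noteq> y" "J = {x,y}"
        "\<not> {x,y} \<subseteq> T" "u x + u y = 0" by blast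
    then show "J \<in> C" using pair_hverts[of x n y] by (auto simp: C_def)
  qed
  show ?thesis
  proof (cases "\<exists>a\<in>{1..n}. u a > 0")
    case True
    then obtain a where a: "a \<in> {1..n}" "u a > 0" by blast
    show ?thesis
    proof (cases "a \<in> T")
      case False
      define B where "B = {b \<in> {1..n}. b \<noteq> a \<and> u b = - u a}"
      have neg: "u b \<le> - u a" if "b \<in> {1..n}" "b \<noteq> a" for b
        using UU[OF a(1) that(1)] that False by auto
      have "C = {J\<in>hverts n. J \<inter> {a} \<noteq> {} \<and> J \<inter> B \<noteq> {}}"
      proof (intro set_eqI iffI)
        fix J assume "J \<in> C"
        from Cpair[THEN iffD1, OF this] obtain x y where xy: "x \<in> {1..n}" "y \<in> {1..n}" "x \<noteq> y" "J = {x,y}"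
          "\<not> {x,y} \<subseteq> T" "u x + u y = 0" by blast
        have "x = a \<or> y = a"
        proof (rule ccontr)
          assume "\<not> (x = a \<or> y = a)"
            then have "u x \<le> - u a" "u y \<le> - u a" using neg[of x] neg[of y] xy(1,2) by auto
          then show False using xy(6) a(2) by linarith
        qed
        moreover have "J \<in> hverts n" using xy pair_hverts[of x n y] by simp
        moreover have "x \<in> B" if "y = a" using that xy unfolding B_def by auto
        moreover have "y \<in> B" if "x = a" using that xy unfolding B_def by auto
        ultimately show "J \<in> {J\<in>hverts n. J \<inter> {a} \<noteq> {} \<and> J \<inter> B \<noteq> {}}"
          using xy(4) by blast
      next
        fix J assume J: "J \<in> {J\<in>hverts n. J \<inter> {a} \<noteq> {} \<and> J \<inter> B \<noteq> {}}"
        then obtain b where b: "b \<in> B" "b \<in> J" "a \<in> J" by auto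
        from J obtain x y where "J = {x,y}" "x \<noteq> y"
          by (auto simp: hverts_def card_2_iff)
        then have "J = {a,b}" using b by (auto simp: B_def)
        then show "J \<in> C" unfolding Cpair[of J] using b a False
          by (intro exI[of _ a] exI[of _ b]) (auto simp: B_def)
      qed
      moreover have "positroid_bases n {J\<in>hverts n. J \<inter> {a} \<noteq> {} \<and> J \<inter> B \<noteq> {}}"
        by (rule positroid_L[of "{a}" a a B]) (auto simp: B_def)
      ultimately show ?thesis by (simp add: C_def)
    next
      case True
      have finT: "finite T" using Tsub finite_subset by blast
      define \<alpha> where "\<alpha> = Max (u ` T)"
      have ale: "u x \<le> \<alpha>" if "x \<in> T" for x using finT that by (auto simp: \<alpha>_def)
      obtain xs where xs: "xs \<in> T" "u xs = \<alpha>"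
      proof -
        have "\<alpha> \<in> u ` T" unfolding \<alpha>_def using finT True by (intro Max_in) auto
        then show ?thesis using that by auto
      qed
      have \<alpha>pos: "\<alpha> > 0" using ale[OF True] a by auto
      have out: "u y \<le> - \<alpha>" if "y \<in> {1..n}" "y \<notin> T" for y
      proof -
        have "xs \<noteq> y" "xs \<in> {1..n}" using xs that Tsub by auto
        then have "u xs + u y \<le> 0" using UU[of xs y] xs that by auto
        then show ?thesis using xs by linarith
      qed
      define A where "A = {x \<in> T. u x = \<alpha>}"
      define B where "B = {y \<in> {1..n} - T. u y = - \<alpha>}"
      have key: "(x \<in> A \<and> y \<in> B) \<or> (y \<in> A \<and> x \<in> B)"
        if "x \<in> {1..n}" "y \<in> {1..n}" "x \<noteq> y" "\<not> {x,y} \<subseteq> T" "u x + u y = 0" for x y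
      proof (cases "x \<in> T")
        case False
        have "y \<in> T"
        proof (rule ccontr)
          assume "y \<notin> T"
          then have "u y \<le> - \<alpha>" "u x \<le> - \<alpha>" using out[of x] out[of y] that False by auto
          then show False using that(5) \<alpha>pos by linarith
        qed
        then show ?thesis using ale[of y] out[of x] that False by (auto simp: A_def B_def)
      next
        case True
        then have "y \<notin> T" using that by auto
        then show ?thesis using ale[of x] out[of y] that True by (auto simp: A_def B_def)
      qed
      have "C = {J\<in>hverts n. J \<inter> A \<noteq> {} \<and> J \<inter> B \<noteq> {}}"
      proof (intro set_eqI iffI)
        fix J assume "J \<in> C"
        from Cpair[THEN iffD1, OF this] obtain x y where xy: "x \<in> {1..n}" "y \<in> {1..n}" "x \<noteq> y" "J = {x,y}"
          "\<not> {x,y} \<subseteq> T" "u x + u y = 0" by blast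
        then show "J \<in> {J\<in>hverts n. J \<inter> A \<noteq> {} \<and> J \<inter> B \<noteq> {}}"
          using key[OF xy(1,2,3,5,6)] pair_hverts[of x n y] by auto
      next
        fix J assume J: "J \<in> {J\<in>hverts n. J \<inter> A \<noteq> {} \<and> J \<inter> B \<noteq> {}}"
        then obtain x y where b: "x \<in> A" "x \<in> J" "y \<in> B" "y \<in> J" by auto
        from J obtain x' y' where "J = {x',y'}" "x' \<noteq> y'"
          by (auto simp: hverts_def card_2_iff)
        moreover have "x \<noteq> y" using b by (auto simp: A_def B_def)
        ultimately have "J = {x,y}" using b by auto
        then show "J \<in> C" unfolding Cpair[of J] using b Tsub
          by (intro exI[of _ x] exI[of _ y]) (auto simp: A_def B_def)
      qed
      moreover have "positroid_bases n {J\<in>hverts n. J \<inter> A \<noteq> {} \<and> J \<inter> B \<noteq> {}}"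
      proof (cases "T = {p..q}")
        case True
        then show ?thesis by (intro positroid_L[of A p q B]) (auto simp: A_def B_def)
      next
        case False
        then have T2: "T = {1..n} - {p..q}" using T by auto
        have "positroid_bases n {J\<in>hverts n. J \<inter> B \<noteq> {} \<and> J \<inter> A \<noteq> {}}"
          by (rule positroid_L[of B p q A]) (auto simp: A_def B_def T2)
        then show ?thesis by (simp add: conj_commute)
      qed
      ultimately show ?thesis by (simp add: C_def)
    qed
  next
    case False
    then have npos: "u a \<le> 0" if "a \<in> {1..n}" for a using that by (meson not_less)
    define Z where "Z = {a \<in> {1..n}. u a = 0}"
    have CZ: "C = {J\<in>hverts n. J \<subseteq> Z \<and> \<not> J \<subseteq> T}"
    proof (intro set_eqI iffI)
      fix J assume "J \<in> C"
      from Cpair[THEN iffD1, OF this] obtain x y where xy: "x \<in> {1..n}" "y \<in> {1..n}" "x \<noteq> y" "J = {x,y}"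
        "\<not> {x,y} \<subseteq> T" "u x + u y = 0" by blast
      then show "J \<in> {J\<in>hverts n. J \<subseteq> Z \<and> \<not> J \<subseteq> T}"
        using npos[of x] npos[of y] pair_hverts[of x n y] by (auto simp: Z_def)
    next
      fix J assume J: "J \<in> {J\<in>hverts n. J \<subseteq> Z \<and> \<not> J \<subseteq> T}"
      then obtain x y where "J = {x,y}" "x \<noteq> y"
        by (auto simp: hverts_def card_2_iff)
      then show "J \<in> C" unfolding Cpair[of J] using J
        by (intro exI[of _ x] exI[of _ y]) (auto simp: Z_def)
    qed
    show ?thesis
    proof (cases "T = {p..q}")
      case True
      then show ?thesis using positroid_M1[of n Z p q] CZ by (simp add: C_def)
    next
      case False
      then have T2: "T = {1..n} - {p..q}" using T by auto
      have "C = {J\<in>hverts n. J \<subseteq> Z \<and> J \<inter> {p..q} \<noteq> {}}"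
        unfolding CZ T2
      proof (intro Collect_cong conj_cong refl)
        fix J assume "J \<in> hverts n" "J \<subseteq> Z"
        then have "J \<subseteq> {1..n}" by (auto simp: hverts_def)
        then show "(\<not> J \<subseteq> {1..n} - {p..q}) = (J \<inter> {p..q} \<noteq> {})" by blast
      qed
      then show ?thesis using positroid_M2[of n Z p q] by (simp add: C_def)
    qed
  qed
qed



lemma sum_pair_hv: "J \<in> hverts n \<Longrightarrow> \<exists>a b. 1 \<le> a \<and> a < b \<and> b \<le> n \<and> J = {a,b} \<and> sum f J = f a + f b"
  by (erule hverts_obtain) auto

lemma cell_lemma:
  fixes h :: "nat set \<Rightarrow> real"
  assumes hh: "\<forall>J\<in>hverts n. h J = (if J \<subseteq> {p..q} then 1 else 0)"
    and pq: "1 \<le> p" "q \<le> n"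
    and R: "reg_cell n h C"
  shows "(C \<subseteq> {J\<in>hverts n. \<not> J \<subseteq> {p..q}} \<or> C \<subseteq> {J\<in>hverts n. \<not> J \<subseteq> {1..n} - {p..q}})
         \<and> positroid_bases n C"
proof -
  define S where "S = {p..q}"
  define Sc where "Sc = {1..n} - {p..q}"
  from R obtain w :: "nat \<Rightarrow> real" and c where
    le: "\<forall>J\<in>hverts n. (\<Sum>a\<in>J. w a) + c \<le> h J" and
    C: "C = {J\<in>hverts n. (\<Sum>a\<in>J. w a) + c = h J}"
    unfolding reg_cell_def by blast
  have hp: "h {a,b} = (if a \<in> S \<and> b \<in> S then 1 else 0)" if "1 \<le> a" "a < b" "b \<le> n" for a b
    using hh hverts_pair[OF that] by (simp add: S_def)
  have lep: "w a + w b + c \<le> (if a \<in> S \<and> b \<in> S then 1 else 0)" if "1 \<le> a" "a < b" "b \<le> n" for a b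
    using le hverts_pair[OF that] hp[OF that] that by auto
  have lep': "w a + w b + c \<le> (if a \<in> S \<and> b \<in> S then 1 else 0)"
    if "a \<in> {1..n}" "b \<in> {1..n}" "a \<noteq> b" for a b
  proof (cases "a < b")
    case True then show ?thesis using lep[of a b] that by auto
  next
    case False then have "b < a" using that by auto
    then show ?thesis using lep[of b a] that by (auto simp: add.commute conj_commute)
  qed
  show ?thesis
  proof (cases "\<exists>J\<in>C. J \<subseteq> S")
    case True
    then obtain J0 where J0: "J0 \<in> C" "J0 \<subseteq> S" by blast
    then obtain s1 s2 where s: "1 \<le> s1" "s1 < s2" "s2 \<le> n" "J0 = {s1,s2}"
      by (auto simp: C intro: hverts_obtain)
    have s12: "w s1 + w s2 + c = 1" using J0 s hp[OF s(1-3)] by (auto simp: C)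
    have noSc: "\<not> J \<subseteq> Sc" if "J \<in> C" for J
    proof
      assume JSc: "J \<subseteq> Sc"
      from that obtain t1 t2 where t: "1 \<le> t1" "t1 < t2" "t2 \<le> n" "J = {t1,t2}"
        by (auto simp: C intro: hverts_obtain)
      have "t1 \<notin> S" "t2 \<notin> S" using JSc t by (auto simp: S_def Sc_def)
      have t12: "w t1 + w t2 + c = 0" using that t hp[OF t(1-3)] \<open>t1 \<notin> S\<close> by (auto simp: C)
      have "s1 \<in> S" "s2 \<in> S" using J0 s by auto
      have "w s1 + w t1 + c \<le> 0" using lep'[of s1 t1] s t \<open>t1 \<notin> S\<close> \<open>s1 \<in> S\<close> by auto
      moreover have "w s2 + w t2 + c \<le> 0" using lep'[of s2 t2] s t \<open>t2 \<notin> S\<close> \<open>s2 \<in> S\<close> by auto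
      ultimately show False using s12 t12 by linarith
    qed
    define u where "u a = w a + c / 2 - (if a \<in> S then 1 else 0) + 1 / 2" for a
    have sumu: "sum u {a,b} = w a + w b + c - (if a \<in> S then 1 else 0) - (if b \<in> S then 1 else 0) + 1"
      if "a < b" for a b :: nat
      using that by (simp add: u_def)
    have CC: "C = {J\<in>hverts n. \<not> J \<subseteq> Sc \<and> sum u J = 0}"
    proof (intro set_eqI iffI)
      fix J assume "J \<in> C"
      then obtain a b where ab: "1 \<le> a" "a < b" "b \<le> n" "J = {a,b}"
        by (auto simp: C intro: hverts_obtain)
      have "\<not> J \<subseteq> Sc" using noSc \<open>J \<in> C\<close> by auto
      then have "a \<in> S \<or> b \<in> S" using ab by (auto simp: S_def Sc_def)
      then show "J \<in> {J\<in>hverts n. \<not> J \<subseteq> Sc \<and> sum u J = 0}"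
        using \<open>J \<in> C\<close> \<open>\<not> J \<subseteq> Sc\<close> ab sumu[of a b] hp[OF ab(1-3)] by (auto simp: C)
    next
      fix J assume J: "J \<in> {J\<in>hverts n. \<not> J \<subseteq> Sc \<and> sum u J = 0}"
      then obtain a b where ab: "1 \<le> a" "a < b" "b \<le> n" "J = {a,b}"
        by (auto intro: hverts_obtain)
      have "a \<in> S \<or> b \<in> S" using ab J by (auto simp: S_def Sc_def)
      then show "J \<in> C"
        using J ab sumu[of a b] hp[OF ab(1-3)] by (auto simp: C)
    qed
    have U: "\<forall>J\<in>hverts n. \<not> J \<subseteq> Sc \<longrightarrow> sum u J \<le> 0"
    proof (intro ballI impI)
      fix J assume J: "J \<in> hverts n" "\<not> J \<subseteq> Sc"
      then obtain a b where ab: "1 \<le> a" "a < b" "b \<le> n" "J = {a,b}"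
        by (auto intro: hverts_obtain)
      have "a \<in> S \<or> b \<in> S" using ab J by (auto simp: S_def Sc_def)
      then show "sum u J \<le> 0" using lep[OF ab(1-3)] ab sumu[of a b] by (auto split: if_splits)
    qed
    have "positroid_bases n {J\<in>hverts n. \<not> J \<subseteq> Sc \<and> sum u J = 0}"
      by (rule face_lemma[of Sc p q n]) (use pq U in \<open>auto simp: Sc_def\<close>)
    moreover have "C \<subseteq> {J\<in>hverts n. \<not> J \<subseteq> {1..n} - {p..q}}" using CC by (auto simp: Sc_def)
    ultimately show ?thesis using CC by simp
  next
    case False
    define u where "u a = w a + c / 2" for a
    have sumu: "sum u {a,b} = w a + w b + c" if "a < b" for a b :: nat
      using that by (simp add: u_def)
    have CC: "C = {J\<in>hverts n. \<not> J \<subseteq> S \<and> sum u J = 0}"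
    proof (intro set_eqI iffI)
      fix J assume "J \<in> C"
      then obtain a b where ab: "1 \<le> a" "a < b" "b \<le> n" "J = {a,b}"
        by (auto simp: C intro: hverts_obtain)
      have "\<not> J \<subseteq> S" using False \<open>J \<in> C\<close> by auto
      then show "J \<in> {J\<in>hverts n. \<not> J \<subseteq> S \<and> sum u J = 0}"
        using \<open>J \<in> C\<close> ab sumu[of a b] hp[OF ab(1-3)] by (auto simp: C)
    next
      fix J assume J: "J \<in> {J\<in>hverts n. \<not> J \<subseteq> S \<and> sum u J = 0}"
      then obtain a b where ab: "1 \<le> a" "a < b" "b \<le> n" "J = {a,b}"
        by (auto intro: hverts_obtain)
      then show "J \<in> C"
        using J ab sumu[of a b] hp[OF ab(1-3)] by (auto simp: C)
    qed
    have U: "\<forall>J\<in>hverts n. \<not> J \<subseteq> S \<longrightarrow> sum u J \<le> 0"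
    proof (intro ballI impI)
      fix J assume J: "J \<in> hverts n" "\<not> J \<subseteq> S"
      then obtain a b where ab: "1 \<le> a" "a < b" "b \<le> n" "J = {a,b}"
        by (auto intro: hverts_obtain)
      then show "sum u J \<le> 0" using J lep[OF ab(1-3)] sumu[of a b] by (auto split: if_splits)
    qed
    have "positroid_bases n {J\<in>hverts n. \<not> J \<subseteq> S \<and> sum u J = 0}"
      by (rule face_lemma[of S p q n]) (use pq U in \<open>auto simp: S_def\<close>)
    moreover have "C \<subseteq> {J\<in>hverts n. \<not> J \<subseteq> {p..q}}" using CC by (auto simp: S_def)
    ultimately show ?thesis using CC by simp
  qed
qed



lemma split_main:
  fixes h :: "nat set \<Rightarrow> real"
  assumes hh: "\<forall>J\<in>hverts n. h J = (if J \<subseteq> {p..q} then 1 else 0)"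
    and pq: "2 \<le> p" "p < q" "q \<le> n" and nf: "\<not> (p = 2 \<and> q = n)"
  shows "split_positroidal_subdiv n h"
proof -
  define P1 where "P1 = {J\<in>hverts n. \<not> J \<subseteq> {p..q}}"
  define P2 where "P2 = {J\<in>hverts n. \<not> J \<subseteq> {1..n} - {p..q}}"
  have cl: "(C \<subseteq> P1 \<or> C \<subseteq> P2) \<and> positroid_bases n C" if "reg_cell n h C" for C
    using cell_lemma[OF hh _ pq(3) that] pq unfolding P1_def P2_def by auto
  have hp: "h {a,b} = (if a \<in> {p..q} \<and> b \<in> {p..q} then 1 else 0)" if "1 \<le> a" "a < b" "b \<le> n" for a b
    using hh hverts_pair[OF that] by simp
  have e1: "{1,2} \<in> P1" using pq by (auto simp: P1_def hverts_def)
  have e2: "{p,q} \<in> P2" using pq by (auto simp: P2_def hverts_def)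
  have e3: "{p,q} \<notin> P1" using pq by (auto simp: P1_def)
  obtain x where x: "x \<in> {1..n}" "x \<notin> {p..q}" "x \<noteq> 1"
  proof (cases "p = 2")
    case True then have "q < n" using nf pq by auto
    then show ?thesis using that[of n] pq by auto
  next
    case False then show ?thesis using that[of 2] pq by auto
  qed
  have e4: "{1,x} \<notin> P2" using x pq by (auto simp: P2_def)
  have e5: "{1,x} \<in> P1" using x pq by (auto simp: P1_def hverts_def)
  have r1: "reg_cell n h P1"
    unfolding reg_cell_def
  proof (intro conjI exI[of _ "\<lambda>_. 0"] exI[of _ 0])
    show "P1 \<noteq> {}" using e1 by auto
    show "\<forall>J\<in>hverts n. (\<Sum>a\<in>J. (0::real)) + 0 \<le> h J" using hh by auto
    show "P1 = {J \<in> hverts n. (\<Sum>a\<in>J. (0::real)) + 0 = h J}" unfolding P1_def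
    proof (intro Collect_cong conj_cong refl)
      fix J assume "J \<in> hverts n"
      then show "(\<not> J \<subseteq> {p..q}) = ((\<Sum>a\<in>J. (0::real)) + 0 = h J)" using hh by simp
    qed
  qed
  have r2: "reg_cell n h P2"
    unfolding reg_cell_def
  proof (intro conjI exI[of _ "\<lambda>a. if a \<in> {p..q} then 1 else 0"] exI[of _ "-1"])
    show "P2 \<noteq> {}" using e2 by auto
    show "\<forall>J\<in>hverts n. (\<Sum>a\<in>J. if a \<in> {p..q} then 1 else 0) + - 1 \<le> h J"
    proof
      fix J assume "J \<in> hverts n"
      then obtain a b where ab: "1 \<le> a" "a < b" "b \<le> n" "J = {a,b}" by (rule hverts_obtain)
      show "(\<Sum>a\<in>J. if a \<in> {p..q} then 1 else 0) + - 1 \<le> h J"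
        using ab hp[OF ab(1-3)] by auto
    qed
    show "P2 = {J \<in> hverts n. (\<Sum>a\<in>J. if a \<in> {p..q} then 1 else 0) + - 1 = h J}"
    proof (intro set_eqI iffI)
      fix J assume "J \<in> P2"
      then have "J \<in> hverts n" by (auto simp: P2_def)
      then obtain a b where ab: "1 \<le> a" "a < b" "b \<le> n" "J = {a,b}" by (rule hverts_obtain)
      then show "J \<in> {J \<in> hverts n. (\<Sum>a\<in>J. if a \<in> {p..q} then 1 else 0) + - 1 = h J}"
        using \<open>J \<in> P2\<close> hp[OF ab(1-3)] \<open>J \<in> hverts n\<close> by (auto simp: P2_def)
    next
      fix J assume J: "J \<in> {J \<in> hverts n. (\<Sum>a\<in>J. if a \<in> {p..q} then 1 else 0) + - 1 = h J}"
      then have "J \<in> hverts n" by auto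
      then obtain a b where ab: "1 \<le> a" "a < b" "b \<le> n" "J = {a,b}" by (rule hverts_obtain)
      then show "J \<in> P2"
        using J hp[OF ab(1-3)] by (auto simp: P2_def split: if_splits)
    qed
  qed
  have m1: "max_cell n h P1" unfolding max_cell_def
  proof (intro conjI allI impI r1)
    fix C' assume C': "reg_cell n h C' \<and> P1 \<subseteq> C'"
    then have "C' \<subseteq> P1 \<or> C' \<subseteq> P2" using cl by blast
    then show "C' = P1" using C' e4 e5 by blast
  qed
  have m2: "max_cell n h P2" unfolding max_cell_def
  proof (intro conjI allI impI r2)
    fix C' assume C': "reg_cell n h C' \<and> P2 \<subseteq> C'"
    then have "C' \<subseteq> P1 \<or> C' \<subseteq> P2" using cl by blast
    then show "C' = P2" using C' e2 e3 by blast
  qed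
  have "{C. max_cell n h C} = {P1, P2}"
  proof (intro set_eqI iffI)
    fix C assume "C \<in> {C. max_cell n h C}"
    then have M: "max_cell n h C" by simp
    then have "C \<subseteq> P1 \<or> C \<subseteq> P2" using cl by (auto simp: max_cell_def)
    then show "C \<in> {P1, P2}" using M r1 r2 by (auto simp: max_cell_def)
  next
    fix C assume "C \<in> {P1, P2}"
    then show "C \<in> {C. max_cell n h C}" using m1 m2 by auto
  qed
  moreover have "P1 \<noteq> P2" using e2 e3 by auto
  ultimately have "card {C. max_cell n h C} = 2" by simp
  then show ?thesis unfolding split_positroidal_subdiv_def positroidal_subdiv_def using cl by blast
qed



definition phi :: "nat \<Rightarrow> tableau2 \<Rightarrow> int" where
  "phi t T = int (size (filter_mset (\<lambda>x. x \<le> t) (fst T))) - int (size (filter_mset (\<lambda>x. x \<le> Suc t) (snd T)))"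

lemma phi_union: "phi t (tab_union T U) = phi t T + phi t U"
  by (simp add: phi_def tab_union_def)

lemma phi_consec: "phi t (consec_cols D) = 0"
proof -
  have "filter_mset (\<lambda>x. x \<le> Suc t) (image_mset Suc D) = image_mset Suc (filter_mset (\<lambda>x. Suc x \<le> Suc t) D)"
    by (rule image_mset_filter_mset_swap[symmetric])
  then show ?thesis by (simp add: phi_def consec_cols_def)
qed

lemma size_filter_sum: "finite A \<Longrightarrow> size (filter_mset P (\<Sum>j\<in>A. M j)) = (\<Sum>j\<in>A. size (filter_mset P (M j)))"
  by (induction A rule: finite_induct) auto

lemma size_filter_replicate: "size (filter_mset P (replicate_mset k a)) = (if P a then k else 0)"
  by (induction k) auto

lemma phi_fund:
  assumes supp: "\<forall>t. t \<notin> {1..n-2} \<longrightarrow> c t = 0"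
  shows "phi t (fund_union n c) = int (c t)"
proof -
  have "phi t (fund_union n c) = (\<Sum>m\<in>{1..n-2}. int (if m \<le> t then c m else 0))
      - (\<Sum>m\<in>{1..n-2}. int (if m + 2 \<le> Suc t then c m else 0))"
    by (simp add: phi_def fund_union_def fund_tab_def size_filter_sum size_filter_replicate of_nat_sum)
  also have "\<dots> = (\<Sum>m\<in>{1..n-2}. (int (if m \<le> t then c m else 0) - int (if m + 2 \<le> Suc t then c m else 0)))"
    by (simp add: sum_subtractf)
  also have "\<dots> = (\<Sum>m\<in>{1..n-2}. (if m = t then int (c m) else 0))"
    by (intro sum.cong refl) auto
  also have "\<dots> = int (c t)" using supp by (auto simp: sum.delta')
  finally show ?thesis .
qed

lemma equiv_phi:
  assumes "tab_equiv n T (fund_union n c)" "\<forall>t. t \<notin> {1..n-2} \<longrightarrow> c t = 0"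
  shows "int (c t) = phi t T"
proof -
  from assms(1) obtain D D' where "tab_union T (consec_cols D) = tab_union (fund_union n c) (consec_cols D')"
    by (auto simp: tab_equiv_def)
  then have "phi t (tab_union T (consec_cols D)) = phi t (tab_union (fund_union n c) (consec_cols D'))" by simp
  then show ?thesis using phi_fund[OF assms(2)] by (simp add: phi_union phi_consec)
qed

lemma count_fund_fst:
  assumes supp: "\<forall>t. t \<notin> {1..n-2} \<longrightarrow> c t = 0"
  shows "count (fst (fund_union n c)) x = c x"
proof -
  have "count (fst (fund_union n c)) x = (\<Sum>m\<in>{1..n-2}. (if m = x then c m else 0))"
    by (simp add: fund_union_def fund_tab_def count_sum)
  also have "\<dots> = c x" using supp by (auto simp: sum.delta)
  finally show ?thesis .
qed

lemma count_fund_snd: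
  assumes supp: "\<forall>t. t \<notin> {1..n-2} \<longrightarrow> c t = 0"
  shows "count (snd (fund_union n c)) x = (if 2 \<le> x then c (x - 2) else 0)"
proof -
  have "count (snd (fund_union n c)) x = (\<Sum>m\<in>{1..n-2}. (if m = x - 2 \<and> 2 \<le> x then c m else 0))"
    by (simp add: fund_union_def fund_tab_def count_sum) (intro sum.cong refl, auto)
  also have "\<dots> = (if 2 \<le> x then c (x - 2) else 0)" using supp by (auto simp: sum.delta)
  finally show ?thesis .
qed

lemma vT_one_col:
  assumes "1 \<le> i" "i + 2 \<le> j" "j \<le> n"
  shows "vT n (one_col i j) = (\<lambda>t. if i \<le> t \<and> t \<le> j - 2 then 1 else 0)"
proof -
  define c0 :: "nat \<Rightarrow> nat" where "c0 t = (if i \<le> t \<and> t \<le> j - 2 then 1 else 0)" for t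
  have supp: "\<forall>t. t \<notin> {1..n-2} \<longrightarrow> c0 t = 0" using assms by (auto simp: c0_def)
  have eq: "tab_union (one_col i j) (consec_cols (mset_set {i + 1..j - 2})) =
          tab_union (fund_union n c0) (consec_cols {#})"
  proof -
    have f: "fst (tab_union (one_col i j) (consec_cols (mset_set {i + 1..j - 2}))) =
          fst (tab_union (fund_union n c0) (consec_cols {#}))"
      unfolding multiset_eq_iff
    proof
      fix x show "count (fst (tab_union (one_col i j) (consec_cols (mset_set {i + 1..j - 2})))) x =
          count (fst (tab_union (fund_union n c0) (consec_cols {#}))) x"
        using count_fund_fst[OF supp, of x] assms c0_def[of x]
        by (auto simp add: tab_union_def one_col_def consec_cols_def count_mset_set')
    qed
    have s: "snd (tab_union (one_col i j) (consec_cols (mset_set {i + 1..j - 2}))) =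
          snd (tab_union (fund_union n c0) (consec_cols {#}))"
      unfolding multiset_eq_iff
    proof
      fix x
      have "image_mset Suc (mset_set {i + 1..j - 2}) = mset_set (Suc ` {i + 1..j - 2})"
        by (rule image_mset_mset_set) auto
      then show "count (snd (tab_union (one_col i j) (consec_cols (mset_set {i + 1..j - 2})))) x =
          count (snd (tab_union (fund_union n c0) (consec_cols {#}))) x"
        using count_fund_snd[OF supp, of x] assms c0_def[of "x - 2"]
        by (auto simp add: tab_union_def one_col_def consec_cols_def count_mset_set')
    qed
    show ?thesis using f s by (simp add: prod_eq_iff)
  qed
  have ex: "tab_equiv n (one_col i j) (fund_union n c0)"
    unfolding tab_equiv_def
    apply (rule exI[of _ "mset_set {i+1..j-2}"])
    apply (rule exI[of _ "{#}"])
    using eq assms by auto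

  have "(THE c. (\<forall>j. j \<notin> {1..n-2} \<longrightarrow> c j = 0) \<and> tab_equiv n (one_col i j) (fund_union n c)) = c0"
  proof (rule the_equality)
    show "(\<forall>j. j \<notin> {1..n-2} \<longrightarrow> c0 j = 0) \<and> tab_equiv n (one_col i j) (fund_union n c0)"
      using supp ex by blast
  next
    fix c assume c: "(\<forall>j. j \<notin> {1..n-2} \<longrightarrow> c j = 0) \<and> tab_equiv n (one_col i j) (fund_union n c)"
    show "c = c0"
    proof
      fix t
      have "int (c t) = phi t (one_col i j)" using c equiv_phi by blast
      moreover have "int (c0 t) = phi t (one_col i j)" using supp ex equiv_phi by blast
      ultimately show "c t = c0 t" by simp
    qed
  qed
  then show ?thesis unfolding vT_def by (auto simp: c0_def)
qed



lemma web_pl_pair: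
  assumes "1 \<le> a" "a < b"
  shows "web_pl {a,b} x = (if a = 1 then 1 else (\<Sum>m\<in>{a-1..b-2}. x m))"
proof (cases "a = 1")
  case True
  then show ?thesis using assms
    by (simp add: web_pl_def minor2_def web_row1_def web_row2_def max_def min_def)
next
  case False
  then have a2: "2 \<le> a" using assms by auto
  have m: "web_pl {a,b} x = web_row1 x a * web_row2 x b - web_row1 x b * web_row2 x a"
    using assms by (simp add: web_pl_def minor2_def max_def min_def)
  have r1a: "web_row1 x a = - (\<Sum>m\<in>{1..a-2}. x m)" using a2 by (auto simp: web_row1_def)
  have r1b: "web_row1 x b = - (\<Sum>m\<in>{1..b-2}. x m)" using a2 assms by (auto simp: web_row1_def)
  have r2: "web_row2 x a = 1" "web_row2 x b = 1" using a2 assms by (auto simp: web_row2_def)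
  have un: "{1..b-2} = {1..a-2} \<union> {a-1..b-2}" using a2 assms by auto
  have "(\<Sum>m\<in>{1..b-2}. x m) = (\<Sum>m\<in>{1..a-2}. x m) + (\<Sum>m\<in>{a-1..b-2}. x m)"
    unfolding un by (rule sum.union_disjoint) auto
  then show ?thesis using m r1a r1b r2 False by simp
qed

lemma lim_inv_s: "((\<lambda>s::real. C / s) \<longlongrightarrow> 0) at_top"
proof -
  have "((\<lambda>s::real. C * inverse s) \<longlongrightarrow> C * 0) at_top"
    by (intro tendsto_mult tendsto_const tendsto_inverse_0_at_top filterlim_ident)
  then show ?thesis by (simp add: divide_inverse)
qed

lemma Lim_at_top_eq: "((f::real \<Rightarrow> real) \<longlongrightarrow> l) at_top \<Longrightarrow> Lim at_top f = l"
  by (rule tendsto_Lim) simp_all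

lemma lim_case1:
  assumes k: "1 \<le> k"
  shows "Lim at_top (\<lambda>s::real. - ln (k * exp (- s)) / s) = 1"
proof (rule Lim_at_top_eq)
  have ev: "eventually (\<lambda>s::real. 1 - ln k / s = - ln (k * exp (- s)) / s) at_top"
    using eventually_gt_at_top[of 0]
  proof (rule eventually_mono)
    fix s :: real assume "0 < s"
    then show "1 - ln k / s = - ln (k * exp (- s)) / s" using k
      by (simp add: ln_mult field_simps)
  qed
  have "((\<lambda>s::real. 1 - ln k / s) \<longlongrightarrow> 1 - 0) at_top"
    by (intro tendsto_diff tendsto_const lim_inv_s)
  then show "((\<lambda>s::real. - ln (k * exp (- s)) / s) \<longlongrightarrow> 1) at_top"
    using tendsto_cong[OF ev] by simp
qed

lemma lim_case0:
  assumes bd: "\<And>s. 0 \<le> s \<Longrightarrow> 1 \<le> F s \<and> F s \<le> K"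
  shows "Lim at_top (\<lambda>s::real. - ln (F s) / s) = 0"
proof (rule Lim_at_top_eq)
  have K: "1 \<le> K" using bd[of 0] by auto
  show "((\<lambda>s::real. - ln (F s) / s) \<longlongrightarrow> 0) at_top"
  proof (rule tendsto_sandwich[of "\<lambda>s. (- ln K) / s" _ _ "\<lambda>s. 0"])
    show "eventually (\<lambda>s. - ln K / s \<le> - ln (F s) / s) at_top"
      using eventually_gt_at_top[of 0]
    proof (rule eventually_mono)
      fix s :: real assume s: "0 < s"
      have "ln (F s) \<le> ln K" using bd[of s] s by auto
      then show "- ln K / s \<le> - ln (F s) / s" using s by (simp add: divide_right_mono)
    qed
    show "eventually (\<lambda>s. - ln (F s) / s \<le> 0) at_top"
      using eventually_gt_at_top[of 0]
    proof (rule eventually_mono)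
      fix s :: real assume s: "0 < s"
      have "0 \<le> ln (F s)" using bd[of s] s by auto
      then show "- ln (F s) / s \<le> 0" using s by simp
    qed
    show "((\<lambda>s. - ln K / s) \<longlongrightarrow> 0) at_top" by (rule lim_inv_s)
    show "((\<lambda>s. 0) \<longlongrightarrow> (0::real)) at_top" by simp
  qed
qed

lemma tropP_pair:
  assumes ij: "1 \<le> i" "i + 2 \<le> j" and ab: "1 \<le> a" "a < b"
  shows "tropP {a,b} (\<lambda>t. if i \<le> t \<and> t \<le> j - 2 then 1 else 0) = (if {a,b} \<subseteq> {i+1..j} then 1 else 0)"
proof -
  define y :: "nat \<Rightarrow> real" where "y = (\<lambda>t. if i \<le> t \<and> t \<le> j - 2 then 1 else 0)"
  have tp: "tropP {a,b} y = Lim at_top (\<lambda>s. - ln (web_pl {a,b} (\<lambda>m. exp (- s * y m))) / s)"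
    by (simp add: tropP_def trop_def)
  show ?thesis
  proof (cases "a = 1")
    case True
    then have "tropP {a,b} y = Lim at_top (\<lambda>s::real. - ln 1 / s)"
      using tp web_pl_pair[OF ab] by simp
    also have "\<dots> = 0" by (rule Lim_at_top_eq) simp
    finally show ?thesis using True ij by (simp add: y_def)
  next
    case False
    then have a2: "2 \<le> a" using ab by auto
    define R where "R = {a-1..b-2}"
    have wp: "web_pl {a,b} (\<lambda>m. exp (- s * y m)) = (\<Sum>m\<in>R. exp (- s * y m))" for s
      using web_pl_pair[OF ab] False by (simp add: R_def)
    have cardR: "card R = b - a" using a2 ab by (simp add: R_def)
    show ?thesis
    proof (cases "{a,b} \<subseteq> {i+1..j}")
      case True
      then have "\<forall>m\<in>R. y m = 1" using a2 ab by (auto simp: R_def y_def)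
      then have "web_pl {a,b} (\<lambda>m. exp (- s * y m)) = real (b - a) * exp (- s)" for s
        using wp cardR by simp
      then have "tropP {a,b} y = Lim at_top (\<lambda>s::real. - ln (real (b - a) * exp (- s)) / s)"
        using tp by simp
      also have "\<dots> = 1" by (rule lim_case1) (use ab in auto)
      finally show ?thesis using True by (simp add: y_def)
    next
      case False
      then have "\<exists>m\<in>R. y m = 0" using a2 ab ij
        by (auto simp: R_def y_def intro: bexI[of _ "a - 1"] bexI[of _ "b - 2"])
      then obtain m0 where m0: "m0 \<in> R" "y m0 = 0" by blast
      have y01: "0 \<le> y m" for m by (simp add: y_def)
      have bd: "1 \<le> (\<Sum>m\<in>R. exp (- s * y m)) \<and> (\<Sum>m\<in>R. exp (- s * y m)) \<le> real (card R)"
        if "0 \<le> s" for s :: real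
      proof
        have "exp (- s * y m0) \<le> (\<Sum>m\<in>R. exp (- s * y m))"
          by (rule member_le_sum) (use m0 in \<open>auto simp: R_def\<close>)
        then show "1 \<le> (\<Sum>m\<in>R. exp (- s * y m))" using m0 by simp
        have "(\<Sum>m\<in>R. exp (- s * y m)) \<le> of_nat (card R) * 1"
        proof (rule sum_bounded_above)
          fix m assume "m \<in> R"
          have "- s * y m \<le> 0" using that y01[of m] by (simp add: mult_nonneg_nonneg)
          then show "exp (- s * y m) \<le> 1" by simp
        qed
        then show "(\<Sum>m\<in>R. exp (- s * y m)) \<le> real (card R)" by simp
      qed
      have "tropP {a,b} y = Lim at_top (\<lambda>s::real. - ln (\<Sum>m\<in>R. exp (- s * y m)) / s)"
        using tp wp by simp
      also have "\<dots> = 0" by (rule lim_case0) (use bd in blast)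
      finally show ?thesis using False by (simp add: y_def)
    qed
  qed
qed


theorem theorem5p2:
  fixes n i j :: nat
  assumes "4 \<le> n" and "1 \<le> i" and "i < j" and "j \<le> n"
    and "\<not> frozen n i j"
  shows "split_positroidal_subdiv n (\<lambda>J. tropP J (vT n (one_col i j)))"
proof -
  have j2: "i + 2 \<le> j" using assms(3,5) by (auto simp: frozen_def)
  have vt: "vT n (one_col i j) = (\<lambda>t. if i \<le> t \<and> t \<le> j - 2 then 1 else 0)"
    by (rule vT_one_col) (use assms j2 in auto)
  have hh: "\<forall>J\<in>hverts n. tropP J (vT n (one_col i j)) = (if J \<subseteq> {i+1..j} then 1 else 0)"
  proof
    fix J assume "J \<in> hverts n"
    then obtain a b where ab: "1 \<le> a" "a < b" "b \<le> n" "J = {a,b}" by (rule hverts_obtain)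
    show "tropP J (vT n (one_col i j)) = (if J \<subseteq> {i+1..j} then 1 else 0)"
      unfolding vt ab(4) by (rule tropP_pair) (use assms j2 ab in auto)
  qed
  show ?thesis
    by (rule split_main[OF hh]) (use assms j2 in \<open>auto simp: frozen_def\<close>)
qed

end
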